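(* Let $m\ge1$, $q=2^m$, let $n$ be odd, and let $L$ be a $2$-linear polynomial over $\mathbb F_{q^n}$. Then $\mathrm{Tr}(x^{q+1})+L(x)$ is a permutation polynomial of $\mathbb F_{q^n}$ if and only if $L^\prime(\ker\mathrm{Tr})=\ker\mathrm{Tr}$ and the map $x\mapsto L^\prime(x)+x^{1/2}$ induces an automorphism of the additive quotient group $\mathbb F_{q^n}/\ker\mathrm{Tr}$ (via $\ker\mathrm{Tr}+\alpha\mapsto\ker\mathrm{Tr}+L'(\alpha)+\alpha^{1/2}$).
   Context: $\mathrm{Tr}$ denotes the trace map of $\mathbb F_{q^n}$ over $\mathbb F_q$. A $2$-linear polynomial over $\mathbb F_{q^n}$ has the form $\sum_{j=0}^{mn-1}a_jx^{2^j}$, $a_j\in\mathbb F_{q^n}$; its adjoint is $L^\prime(x)=\sum_j(a_jx)^{2^{-j}}$, where $y\mapsto y^{2^{-j}}$ is the inverse of $y\mapsto y^{2^j}$ on $\mathbb F_{q^n}$; $x^{1/2}$ denotes the inverse of the automorphism $x\mapsto x^2$ of $\mathbb F_{q^n}$. Polynomials are regarded as maps on $\mathbb F_{q^n}$. *)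

theory Defs
  imports Main
begin

definition tr :: "nat \<Rightarrow> nat \<Rightarrow> 'a::field \<Rightarrow> 'a" where
  "tr m n x = (\<Sum>i<n. x ^ ((2 ^ m) ^ i))"

definition ker_tr :: "nat \<Rightarrow> nat \<Rightarrow> 'a::field set" where
  "ker_tr m n = {x. tr m n x = 0}"

definition frob_inv :: "nat \<Rightarrow> 'a::field \<Rightarrow> 'a" where
  "frob_inv j y = (THE z. z ^ (2 ^ j) = y)"

definition sqrt2 :: "'a::field \<Rightarrow> 'a" where
  "sqrt2 y = (THE z. z ^ 2 = y)"

definition lin2 :: "nat \<Rightarrow> (nat \<Rightarrow> 'a::field) \<Rightarrow> 'a \<Rightarrow> 'a" where
  "lin2 N a x = (\<Sum>j<N. a j * x ^ (2 ^ j))"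

definition lin2_adj :: "nat \<Rightarrow> (nat \<Rightarrow> 'a::field) \<Rightarrow> 'a \<Rightarrow> 'a" where
  "lin2_adj N a x = (\<Sum>j<N. frob_inv j (a j * x))"

definition coset :: "'a::ab_group_add set \<Rightarrow> 'a \<Rightarrow> 'a set" where
  "coset K a = (\<lambda>k. k + a) ` K"

definition quot :: "'a::ab_group_add set \<Rightarrow> 'a set set" where
  "quot K = range (coset K)"

definition induced :: "'a::ab_group_add set \<Rightarrow> ('a \<Rightarrow> 'a) \<Rightarrow> 'a set \<Rightarrow> 'a set" where
  "induced K \<phi> C = coset K (\<phi> (SOME a. C = coset K a))"

definition induces_automorphism :: "'a::ab_group_add set \<Rightarrow> ('a \<Rightarrow> 'a) \<Rightarrow> bool" where
  "induces_automorphism K \<phi> \<longleftrightarrow>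
     (\<forall>a b. coset K a = coset K b \<longrightarrow> coset K (\<phi> a) = coset K (\<phi> b)) \<and>
     (\<forall>a b. coset K (\<phi> (a + b)) = coset K (\<phi> a + \<phi> b)) \<and>
     bij_betw (induced K \<phi>) (quot K) (quot K)"

end

theory Submission
  imports Defs "HOL-Computational_Algebra.Polynomial" "HOL-Number_Theory.Residues"
begin



locale ff =
  fixes m n :: nat and a :: "nat \<Rightarrow> 'a::{field,finite}"
  assumes m1: "m \<ge> 1" and nodd: "odd n"
    and cardF: "card (UNIV :: 'a set) = 2 ^ (m * n)"
begin

abbreviation "N \<equiv> m * n"
abbreviation "q \<equiv> (2::nat) ^ m"

lemma N_pos: "N \<ge> 1"
  using m1 nodd by (metis One_nat_def dvd_0_right le_add1 mult_eq_0_iff not_less_eq_eq odd_pos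
     Suc_leI nat_0_less_mult_iff zero_less_iff_neq_zero le_numeral_extra(2))

lemma char2: "CHAR('a) = 2"
proof -
  have fin: "finite (UNIV :: 'a set)" by simp
  have pos: "CHAR('a) > 0" using finite_imp_CHAR_pos[OF fin] .
  have pr: "prime CHAR('a)" using prime_CHAR_semidom[OF pos] .
  have "CHAR('a) dvd 2 ^ N" using CHAR_dvd_CARD[where 'a='a] cardF by simp
  then have "CHAR('a) dvd 2" using pr prime_dvd_power by blast
  then show ?thesis using pr by (metis prime_nat_iff two_is_prime_nat dvd_refl not_prime_1 prime_gt_1_nat)
qed

lemma two0: "(2::'a) = 0"
  using of_nat_CHAR[where 'a='a] char2 by simp

lemma add_self [simp]: "(x::'a) + x = 0"
  by (metis mult_2 two0 mult_zero_left)

lemma uminus_id [simp]: "- (x::'a) = x"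
  by (rule uminus_CHAR_2[OF char2])

lemma minus_is_plus [simp]: "(x::'a) - y = x + y"
  by (rule minus_CHAR_2[OF char2])

lemma add_eq0_iff: "(x::'a) + y = 0 \<longleftrightarrow> x = y"
  by (metis add_self add.assoc add_0_right add.commute)

lemma sq_add: "((x::'a) + y) ^ 2 = x ^ 2 + y ^ 2"
proof -
  have "(x + y) ^ 2 = x^2 + y^2 + 2 * x * y" by (simp add: power2_eq_square algebra_simps)
  then show ?thesis by (simp add: two0)
qed

lemma pow2_add: "((x::'a) + y) ^ (2 ^ j) = x ^ (2 ^ j) + y ^ (2 ^ j)"
proof (induction j)
  case 0 then show ?case by simp
next
  case (Suc j)
  have "(x + y) ^ (2 ^ Suc j) = ((x + y) ^ (2 ^ j)) ^ 2" by (simp add: power_mult[symmetric] mult.commute)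
  also have "\<dots> = (x ^ (2 ^ j)) ^ 2 + (y ^ (2 ^ j)) ^ 2" using Suc sq_add by simp
  also have "\<dots> = x ^ (2 ^ Suc j) + y ^ (2 ^ Suc j)" by (simp add: power_mult[symmetric] mult.commute)
  finally show ?case .
qed

lemma pow2_sum: "(\<Sum>i\<in>I. (f i::'a)) ^ (2 ^ j) = (\<Sum>i\<in>I. f i ^ (2 ^ j))"
proof (induction I rule: infinite_finite_induct)
  case (infinite A) then show ?case by simp
next
  case empty then show ?case by simp
next
  case (insert x F) then show ?case by (simp add: pow2_add)
qed

lemma pow2_inj: "(x::'a) ^ (2 ^ j) = y ^ (2 ^ j) \<longleftrightarrow> x = y"
proof
  assume "x ^ (2 ^ j) = y ^ (2 ^ j)"
  then have "(x + y) ^ (2 ^ j) = 0" by (simp add: pow2_add)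
  then have "x + y = 0" by simp
  then show "x = y" by (simp add: add_eq0_iff)
qed simp

lemma pow2_bij: "bij (\<lambda>x::'a. x ^ (2 ^ j))"
  using finite_UNIV_inj_surj[of "\<lambda>x::'a. x ^ (2 ^ j)"] pow2_inj unfolding bij_def inj_def by auto

lemma frob_inv_pow: "(frob_inv j y :: 'a) ^ (2 ^ j) = y"
proof -
  have "\<exists>!z::'a. z ^ (2 ^ j) = y"
    using pow2_bij[of j] pow2_inj[of _ j] unfolding bij_def surj_def by metis
  then show ?thesis unfolding frob_inv_def by (rule theI')
qed

lemma frob_inv_eq: "frob_inv j (y :: 'a) = z \<longleftrightarrow> z ^ (2 ^ j) = y"
  using frob_inv_pow[of j y] pow2_inj[of _ j] by metis

lemma frob_inv_add: "frob_inv j ((x::'a) + y) = frob_inv j x + frob_inv j y"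
  by (simp add: frob_inv_eq pow2_add frob_inv_pow)

lemma sqrt2_sq: "(sqrt2 y :: 'a) ^ 2 = y"
  using frob_inv_pow[of 1 y] unfolding frob_inv_def sqrt2_def by simp

lemma sqrt2_add: "sqrt2 ((x::'a) + y) = sqrt2 x + sqrt2 y"
  using sqrt2_sq pow2_inj[of _ 1] sq_add by (metis power_one_right)

lemma fermat: "(x::'a) ^ card (UNIV :: 'a set) = x"
proof (cases "x = 0")
  case False
  have "x * (\<Prod>y\<in>UNIV-{0}. x * y) = x * x ^ (card (UNIV :: 'a set) - 1) * \<Prod>(UNIV-{0})"
    by (simp add: prod.distrib mult_ac)
  also have "x * x ^ (card (UNIV :: 'a set) - 1) = x ^ Suc (card (UNIV :: 'a set) - 1)"
    by (subst power_Suc) auto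
  also have "Suc (card (UNIV :: 'a set) - 1) = card (UNIV :: 'a set)"
    using finite_UNIV_card_ge_0[where ?'a = 'a] by simp
  also have "(\<Prod>y\<in>UNIV-{0}. x * y) = (\<Prod>y\<in>UNIV-{0}. y)"
    by (rule prod.reindex_bij_witness[of _ "\<lambda>y. y / x" "\<lambda>y. x * y"]) (use False in auto)
  finally show ?thesis
    by simp
qed (use finite_UNIV_card_ge_0[where ?'a = 'a] in auto)

lemma fermatN: "(x::'a) ^ (2 ^ N) = x"
  using fermat cardF by simp

lemma fermat_qn: "(x::'a) ^ (q ^ n) = x"
  using fermatN by (simp add: power_mult[symmetric])

end



context ff
begin

definition S :: "'a set" where "S = {x. x ^ q = x}"
definition T :: "'a \<Rightarrow> 'a" where "T z = (\<Sum>i<N. z ^ (2 ^ i))"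
definition perp :: "'a set \<Rightarrow> 'a set" where "perp V = {x. \<forall>v\<in>V. T (x * v) = 0}"
definition subgrp :: "'a set \<Rightarrow> bool" where
  "subgrp V \<longleftrightarrow> 0 \<in> V \<and> (\<forall>x\<in>V. \<forall>y\<in>V. x + y \<in> V)"

lemma qi_eq: "q ^ i = 2 ^ (m * i)"
  by (simp add: power_mult)

lemma powq_add: "((x::'a) + y) ^ (q ^ i) = x ^ (q ^ i) + y ^ (q ^ i)"
  unfolding qi_eq by (rule pow2_add)

lemma powq_sum: "(\<Sum>i\<in>I. (f i::'a)) ^ (q ^ j) = (\<Sum>i\<in>I. f i ^ (q ^ j))"
  unfolding qi_eq by (rule pow2_sum)

lemma powq_add1: "((x::'a) + y) ^ q = x ^ q + y ^ q"
  using powq_add[of x y 1] by simp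

lemma shift_sum:
  assumes "f k = (f 0 :: 'a)"
  shows "(\<Sum>i<k. f (Suc i)) = (\<Sum>i<k. f i)"
proof -
  have "(\<Sum>i<Suc k. f i) = f 0 + (\<Sum>i<k. f (Suc i))" by (rule sum.lessThan_Suc_shift)
  moreover have "(\<Sum>i<Suc k. f i) = (\<Sum>i<k. f i) + f k" by simp
  ultimately show ?thesis using assms by (simp add: add.commute)
qed

lemma Tr_add: "tr m n ((x::'a) + y) = tr m n x + tr m n y"
  unfolding tr_def by (simp add: powq_add sum.distrib)

lemma Tr_q: "tr m n (x::'a) ^ q = tr m n x"
proof -
  have "tr m n x ^ q = (\<Sum>i<n. (x ^ (q ^ i)) ^ q)"
    unfolding tr_def using powq_sum[of _ "{..<n}" 1] by simp
  also have "\<dots> = (\<Sum>i<n. x ^ (q ^ Suc i))"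
    by (simp add: power_mult[symmetric] mult.commute)
  also have "\<dots> = (\<Sum>i<n. x ^ (q ^ i))"
    by (rule shift_sum[where f="\<lambda>i. x ^ (q ^ i)"]) (simp add: fermat_qn)
  finally show ?thesis unfolding tr_def .
qed

lemma Tr_in_S: "tr m n (x::'a) \<in> S"
  using Tr_q unfolding S_def by simp

lemma S_pow: "s \<in> S \<Longrightarrow> s ^ (q ^ i) = s"
proof (induction i)
  case 0 then show ?case by simp
next
  case (Suc i)
  have "s ^ (q ^ Suc i) = (s ^ (q ^ i)) ^ q" by (simp only: power_Suc2 power_mult)
  then show ?case using Suc unfolding S_def by simp
qed

lemma Tr_smul: "s \<in> S \<Longrightarrow> tr m n (s * (x::'a)) = s * tr m n x"
  unfolding tr_def by (simp add: power_mult_distrib S_pow sum_distrib_left)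

lemma Tr_pow_q: "tr m n ((x::'a) ^ q) = tr m n x"
proof -
  have "tr m n (x ^ q) = (\<Sum>i<n. x ^ (q ^ Suc i))"
    unfolding tr_def by (simp add: power_mult[symmetric] mult.commute)
  also have "\<dots> = (\<Sum>i<n. x ^ (q ^ i))"
    by (rule shift_sum[where f="\<lambda>i. x ^ (q ^ i)"]) (simp add: fermat_qn)
  finally show ?thesis unfolding tr_def .
qed

lemma Tr_sq: "tr m n ((x::'a) ^ 2) = tr m n x ^ 2"
  unfolding tr_def using pow2_sum[of _ "{..<n}" 1]
  by (simp add: power_mult[symmetric] mult.commute)

lemma S_subgrp: "subgrp S"
  unfolding subgrp_def S_def by (simp add: powq_add1)

lemma K_subgrp: "subgrp (ker_tr m n :: 'a set)"
  unfolding subgrp_def ker_tr_def by (simp add: Tr_add) (simp add: tr_def zero_power)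

lemma T_add: "T ((x::'a) + y) = T x + T y"
  unfolding T_def by (simp add: pow2_add sum.distrib)

lemma T_sq: "T ((z::'a) ^ 2) = T z"
proof -
  have "T (z ^ 2) = (\<Sum>i<N. z ^ (2 ^ Suc i))"
    unfolding T_def by (simp add: power_mult[symmetric] mult.commute)
  also have "\<dots> = (\<Sum>i<N. z ^ (2 ^ i))"
    by (rule shift_sum[where f="\<lambda>i. z ^ (2 ^ i)"]) (simp add: fermatN)
  finally show ?thesis unfolding T_def .
qed

lemma T_pow2: "T ((z::'a) ^ (2 ^ j)) = T z"
proof (induction j)
  case 0 then show ?case by simp
next
  case (Suc j)
  have "z ^ (2 ^ Suc j) = (z ^ (2 ^ j)) ^ 2" by (simp add: power_mult[symmetric] mult.commute)
  then show ?case using Suc T_sq by simp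
qed

lemma T_idem: "T (z::'a) ^ 2 = T z"
  using T_sq[of z] pow2_sum[of _ "{..<N}" 1] unfolding T_def
  by (simp add: power_mult[symmetric] mult.commute)

lemma T_01: "T (z::'a) = 0 \<or> T z = 1"
proof -
  have "T z * T z = T z" using T_idem[of z] by (simp add: power2_eq_square)
  then have "T z * (T z + 1) = 0" by (metis distrib_left mult_1_right add_self)
  then show ?thesis by (auto simp: add_eq0_iff)
qed

lemma T_Tr: "T (z::'a) = (\<Sum>j<m. tr m n z ^ (2 ^ j))"
proof -
  have "(\<Sum>j<m. tr m n z ^ (2 ^ j)) = (\<Sum>j<m. \<Sum>i<n. z ^ (2 ^ (j + m * i)))"
    unfolding tr_def pow2_sum qi_eq by (simp add: power_mult[symmetric] power_add mult.commute)
  also have "\<dots> = (\<Sum>p\<in>{..<m} \<times> {..<n}. z ^ (2 ^ (fst p + m * snd p)))"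
    by (simp add: sum.cartesian_product split_def)
  also have "\<dots> = (\<Sum>i<N. z ^ (2 ^ i))"
  proof (rule sum.reindex_bij_witness[where i="\<lambda>i. (i mod m, i div m)" and j="\<lambda>p. fst p + m * snd p"])
    fix p :: "nat \<times> nat" assume p: "p \<in> {..<m} \<times> {..<n}"
    then show "((fst p + m * snd p) mod m, (fst p + m * snd p) div m) = p"
      by (cases p) auto
    have "fst p + m * snd p < m + m * snd p" using p by auto
    also have "\<dots> = m * (Suc (snd p))" by simp
    also have "\<dots> \<le> m * n" using p by (intro mult_le_mono2) auto
    finally show "fst p + m * snd p \<in> {..<N}" by simp
    show "z ^ 2 ^ (fst p + m * snd p) = z ^ 2 ^ (fst p + m * snd p)" by simp
  next
    fix i assume i: "i \<in> {..<N}"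
    then show "fst (i mod m, i div m) + m * snd (i mod m, i div m) = i" by simp
    have "i div m < n" using i m1 by (simp add: div_less_iff_less_mult mult.commute)
    then show "(i mod m, i div m) \<in> {..<m} \<times> {..<n}" using m1 by simp
  qed
  finally show ?thesis unfolding T_def ..
qed

end



context ff
begin

lemma T_nonzero: "\<exists>z::'a. T z = 1"
proof (rule ccontr)
  assume "\<not> (\<exists>z::'a. T z = 1)"
  then have all0: "\<forall>z::'a. T z = 0" using T_01 by blast
  define p :: "'a poly" where "p = (\<Sum>i<N. Polynomial.monom 1 (2^i))"
  have polyp: "poly p z = T z" for z
    unfolding p_def T_def by (simp add: poly_sum poly_monom)
  have "Polynomial.coeff p 1 = (\<Sum>i<N. if 2 ^ i = (1::nat) then 1 else 0)"
    unfolding p_def by (simp add: coeff_sum coeff_monom)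
  also have "\<dots> = (\<Sum>i<N. if i = 0 then 1 else 0)"
    by (intro sum.cong) auto
  also have "\<dots> = 1" using N_pos by simp
  finally have "p \<noteq> 0" by auto
  have "Polynomial.degree p \<le> 2 ^ (N - 1)"
  proof (rule degree_le, intro allI impI)
    fix k :: nat assume k: "2 ^ (N - 1) < k"
    have "Polynomial.coeff p k = (\<Sum>i<N. if 2 ^ i = k then 1 else 0)"
      unfolding p_def by (simp add: coeff_sum coeff_monom)
    also have "\<dots> = (\<Sum>i<N. 0)"
    proof (intro sum.cong refl)
      fix i assume "i \<in> {..<N}"
      then have "(2::nat) ^ i \<le> 2 ^ (N - 1)" by (intro power_increasing) auto
      then show "(if 2 ^ i = k then 1 else 0) = (0::'a)" using k by auto
    qed
    finally show "Polynomial.coeff p k = 0" by simp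
  qed
  moreover have "card {x. poly p x = 0} \<le> Polynomial.degree p"
    by (rule card_poly_roots_bound) fact
  moreover have "{x. poly p x = 0} = (UNIV :: 'a set)" using polyp all0 by auto
  ultimately have "(2::nat) ^ N \<le> 2 ^ (N - 1)" using cardF by (metis order_trans)
  then have "N \<le> N - 1" by (simp only: power_increasing_iff)
  then show False using N_pos by linarith
qed

end



context ff
begin

definition addh :: "('a \<Rightarrow> 'a) \<Rightarrow> bool" where
  "addh h \<longleftrightarrow> (\<forall>x y. h (x + y) = h x + h y)"

lemma addh_0: "addh h \<Longrightarrow> h 0 = 0"
  unfolding addh_def by (metis add_0_right add_left_cancel)

lemma subgrp_UNIV: "subgrp UNIV" unfolding subgrp_def by simp

lemma subgrp_image:
  assumes V: "subgrp V" and h: "addh h" shows "subgrp (h ` V)"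
proof -
  have "0 \<in> h ` V" using V addh_0[OF h] unfolding subgrp_def by (metis image_eqI)
  moreover have "x + y \<in> h ` V" if xy: "x \<in> h ` V" "y \<in> h ` V" for x y
  proof -
    obtain u v where "u \<in> V" "v \<in> V" "x = h u" "y = h v" using xy by blast
    then have "x + y = h (u + v)" "u + v \<in> V" using h V unfolding addh_def subgrp_def by auto
    then show ?thesis by blast
  qed
  ultimately show ?thesis unfolding subgrp_def by blast
qed

lemma T0: "T 0 = 0" unfolding T_def by (simp add: zero_power)

lemma perp_subgrp: "subgrp (perp V)"
  unfolding subgrp_def perp_def by (simp add: T0 distrib_right T_add)

lemma perp_anti: "A \<subseteq> B \<Longrightarrow> perp B \<subseteq> perp A"
  unfolding perp_def by auto

definition chi :: "'a \<Rightarrow> int" where "chi w = (if w = 0 then 1 else -1)"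

lemma chi_shift: "chi (T z + 1) = - chi (T z)"
  using T_01[of z] unfolding chi_def by auto

lemma char_sum:
  assumes V: "subgrp V"
  shows "(\<Sum>v\<in>V. chi (T (x * v))) = (if x \<in> perp V then int (card V) else 0)"
proof (cases "x \<in> perp V")
  case True
  then have "(\<Sum>v\<in>V. chi (T (x * v))) = (\<Sum>v\<in>V. 1)"
    unfolding perp_def chi_def by (intro sum.cong) auto
  then show ?thesis using True by simp
next
  case False
  then obtain g where g: "g \<in> V" "T (x * g) \<noteq> 0" unfolding perp_def by auto
  then have g1: "T (x * g) = 1" using T_01 by blast
  have "(\<Sum>v\<in>V. chi (T (x * v))) = (\<Sum>v\<in>V. chi (T (x * (v + g))))"
    by (rule sum.reindex_bij_witness[where i="\<lambda>v. v + g" and j="\<lambda>v. v + g"])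
       (use V g in \<open>auto simp: subgrp_def add.assoc\<close>)
  also have "\<dots> = (\<Sum>v\<in>V. - chi (T (x * v)))"
    by (intro sum.cong refl) (simp add: distrib_left T_add g1 chi_shift)
  also have "\<dots> = - (\<Sum>v\<in>V. chi (T (x * v)))" by (simp add: sum_negf)
  finally show ?thesis using False by simp
qed

lemma perp_UNIV: "perp UNIV = {0}"
proof -
  obtain z0 where z0: "T z0 = 1" using T_nonzero by blast
  have "v = 0" if "v \<in> perp UNIV" for v
  proof (rule ccontr)
    assume "v \<noteq> 0"
    then have "T (v * (z0 / v)) = 1" using z0 by simp
    moreover have "T (v * (z0 / v)) = 0" using that unfolding perp_def by blast
    ultimately show False by simp
  qed
  then show ?thesis unfolding perp_def by (auto simp: T0)
qed

lemma card_perp: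
  assumes V: "subgrp V"
  shows "card V * card (perp V) = card (UNIV :: 'a set)"
proof -
  have "(\<Sum>x\<in>UNIV. \<Sum>v\<in>V. chi (T (x * v))) = (\<Sum>x\<in>UNIV. if x \<in> perp V then int (card V) else 0)"
    using char_sum[OF V] by simp
  also have "\<dots> = (\<Sum>x\<in>UNIV \<inter> perp V. int (card V))"
    by (rule sum.inter_restrict[symmetric]) simp
  also have "\<dots> = int (card (perp V)) * int (card V)" by simp
  finally have e1: "(\<Sum>x\<in>UNIV. \<Sum>v\<in>V. chi (T (x * v))) = int (card (perp V)) * int (card V)" .
  have "(\<Sum>x\<in>UNIV. \<Sum>v\<in>V. chi (T (x * v))) = (\<Sum>v\<in>V. \<Sum>x\<in>UNIV. chi (T (v * x)))"
    by (subst sum.swap) (simp add: mult.commute)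
  also have "\<dots> = (\<Sum>v\<in>V. if v \<in> perp UNIV then int (card (UNIV :: 'a set)) else 0)"
    using char_sum[OF subgrp_UNIV] by simp
  also have "\<dots> = (\<Sum>v\<in>V \<inter> perp UNIV. int (card (UNIV :: 'a set)))"
    by (rule sum.inter_restrict[symmetric]) simp
  also have "V \<inter> perp UNIV = {0}" using V perp_UNIV unfolding subgrp_def by auto
  finally have "(\<Sum>x\<in>UNIV. \<Sum>v\<in>V. chi (T (x * v))) = int (card (UNIV :: 'a set))" by simp
  with e1 have "int (card (perp V)) * int (card V) = int (card (UNIV :: 'a set))" by simp
  then show ?thesis by (metis of_nat_eq_iff of_nat_mult mult.commute)
qed

lemma perp_perp:
  assumes V: "subgrp V"
  shows "perp (perp V) = V"
proof -
  have sub: "V \<subseteq> perp (perp V)" unfolding perp_def by (auto simp: mult.commute)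
  have c1: "card (perp V) * card (perp (perp V)) = card (UNIV :: 'a set)"
    by (rule card_perp[OF perp_subgrp])
  have c2: "card V * card (perp V) = card (UNIV :: 'a set)" by (rule card_perp[OF V])
  have "card (perp V) > 0"
    using perp_subgrp[of V] unfolding subgrp_def by (auto simp: card_gt_0_iff)
  then have "card (perp (perp V)) = card V" using c1 c2 by (metis mult.commute mult_left_cancel not_gr0)
  then show ?thesis using sub by (intro card_subset_eq[symmetric]) auto
qed

lemma perp_le_iff:
  assumes "subgrp A" "subgrp B"
  shows "perp A \<subseteq> perp B \<longleftrightarrow> B \<subseteq> A"
  using perp_anti[of "perp A" "perp B"] perp_anti[of B A] perp_perp[OF assms(1)] perp_perp[OF assms(2)]
  by auto

lemma card_hom:
  assumes h: "addh h"
  shows "card (UNIV :: 'a set) = card (range h) * card {x. h x = 0}"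
proof -
  have fib: "card (h -` {y}) = card {x. h x = 0}" if "y \<in> range h" for y
  proof -
    obtain x0 where x0: "y = h x0" using \<open>y \<in> range h\<close> by auto
    have "h -` {y} = (\<lambda>k. k + x0) ` {x. h x = 0}"
    proof
      show "h -` {y} \<subseteq> (\<lambda>k. k + x0) ` {x. h x = 0}"
      proof
        fix x assume "x \<in> h -` {y}"
        then have "h (x + x0) = 0" using h x0 unfolding addh_def by simp
        moreover have "x = (x + x0) + x0" by (simp add: add.assoc)
        ultimately show "x \<in> (\<lambda>k. k + x0) ` {x. h x = 0}" by blast
      qed
      show "(\<lambda>k. k + x0) ` {x. h x = 0} \<subseteq> h -` {y}"
        using h x0 unfolding addh_def by auto
    qed
    moreover have "inj_on (\<lambda>k. k + x0) {x. h x = 0}" by (auto simp: inj_on_def)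
    ultimately show ?thesis by (simp add: card_image)
  qed
  have U: "(UNIV :: 'a set) = (\<Union>y\<in>range h. h -` {y})" by auto
  have "card (\<Union>y\<in>range h. h -` {y}) = (\<Sum>y\<in>range h. card (h -` {y}))"
    by (rule card_UN_disjoint) auto
  then have "card (UNIV :: 'a set) = (\<Sum>y\<in>range h. card (h -` {y}))" using U by simp
  also have "\<dots> = (\<Sum>y\<in>range h. card {x. h x = 0})" using fib by (intro sum.cong) auto
  finally show ?thesis by simp
qed

lemma addh_Tr: "addh (tr m n :: 'a \<Rightarrow> 'a)" unfolding addh_def by (simp add: Tr_add)

lemma K_sub_perpS: "ker_tr m n \<subseteq> perp S"
proof
  fix k :: 'a assume "k \<in> ker_tr m n"
  then have k: "tr m n k = 0" unfolding ker_tr_def by simp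
  have "T (k * s) = 0" if "s \<in> S" for s
    using that by (simp add: T_Tr mult.commute[of k] Tr_smul k zero_power)
  then show "k \<in> perp S" unfolding perp_def by auto
qed

lemma K_eq: "ker_tr m n = perp S" and range_Tr: "range (tr m n :: 'a \<Rightarrow> 'a) = S"
proof -
  have c1: "card (UNIV :: 'a set) = card (range (tr m n :: 'a \<Rightarrow> 'a)) * card (ker_tr m n :: 'a set)"
    using card_hom[OF addh_Tr] unfolding ker_tr_def by simp
  have rsub: "range (tr m n :: 'a \<Rightarrow> 'a) \<subseteq> S" using Tr_in_S by auto
  have c2: "card S * card (perp S) = card (UNIV :: 'a set)" by (rule card_perp[OF S_subgrp])
  have Spos: "card S > 0" using S_subgrp unfolding subgrp_def by (auto simp: card_gt_0_iff)
  have Kpos: "card (ker_tr m n :: 'a set) > 0"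
    using K_subgrp unfolding subgrp_def by (auto simp: card_gt_0_iff)
  have "card (range (tr m n :: 'a \<Rightarrow> 'a)) \<le> card S" using rsub by (intro card_mono) auto
  then have le: "card S * card (perp S) \<le> card S * card (ker_tr m n :: 'a set)"
    using c1 c2 by (metis mult_le_mono1)
  then have "card (perp S) \<le> card (ker_tr m n :: 'a set)" using Spos by simp
  then show K: "ker_tr m n = perp S" using K_sub_perpS by (intro card_seteq) auto
  have "card (range (tr m n :: 'a \<Rightarrow> 'a)) * card (ker_tr m n :: 'a set) = card S * card (ker_tr m n :: 'a set)"
    using c1 c2 K by (metis mult.commute)
  then have "card (range (tr m n :: 'a \<Rightarrow> 'a)) = card S" using Kpos by (metis mult_right_cancel not_gr0)
  then show "range (tr m n :: 'a \<Rightarrow> 'a) = S" using rsub by (intro card_subset_eq) auto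
qed

lemma S_eq: "S = perp (ker_tr m n)"
  using perp_perp[OF S_subgrp] K_eq by simp

end



context ff
begin

abbreviation "L \<equiv> lin2 N a"
abbreviation "L' \<equiv> lin2_adj N a"
definition g :: "'a \<Rightarrow> 'a" where "g x = L x + x ^ 2"
definition g' :: "'a \<Rightarrow> 'a" where "g' x = L' x + sqrt2 x"

lemma addh_L: "addh L"
  unfolding addh_def lin2_def by (simp add: pow2_add distrib_left sum.distrib)

lemma addh_L': "addh L'"
  unfolding addh_def lin2_adj_def by (simp add: distrib_left frob_inv_add sum.distrib)

lemma addh_g: "addh g"
  using addh_L unfolding addh_def g_def by (simp add: sq_add algebra_simps)

lemma addh_g': "addh g'"
  using addh_L' unfolding addh_def g'_def by (simp add: sqrt2_add algebra_simps)

lemma T_sum: "T (\<Sum>i\<in>I. f i) = (\<Sum>i\<in>I. T (f i))"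
proof (induction I rule: infinite_finite_induct)
  case (infinite A) then show ?case by (simp add: T0)
next
  case empty then show ?case by (simp add: T0)
next
  case (insert x F) then show ?case by (simp add: T_add)
qed

lemma adj_L: "T (L x * y) = T (x * L' y)"
proof -
  have "T (L x * y) = (\<Sum>j<N. T (a j * x ^ (2 ^ j) * y))"
    unfolding lin2_def by (simp add: sum_distrib_right T_sum)
  also have "\<dots> = (\<Sum>j<N. T (x * frob_inv j (a j * y)))"
  proof (intro sum.cong refl)
    fix j
    have "a j * x ^ (2 ^ j) * y = (x * frob_inv j (a j * y)) ^ (2 ^ j)"
      by (simp add: power_mult_distrib frob_inv_pow mult_ac)
    then show "T (a j * x ^ (2 ^ j) * y) = T (x * frob_inv j (a j * y))" by (simp add: T_pow2)
  qed
  also have "\<dots> = T (x * L' y)"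
    unfolding lin2_adj_def by (simp add: sum_distrib_left T_sum)
  finally show ?thesis .
qed

lemma adj_g: "T (g x * y) = T (x * g' y)"
proof -
  have "x ^ 2 * y = (x * sqrt2 y) ^ 2" by (simp add: power_mult_distrib sqrt2_sq)
  then have "T (x ^ 2 * y) = T (x * sqrt2 y)" by (simp add: T_sq)
  then show ?thesis unfolding g_def g'_def using adj_L[of x y]
    by (simp add: distrib_right distrib_left T_add)
qed

lemma preimage_perp:
  assumes adj: "\<And>x y. T (h x * y) = T (x * h' y)"
  shows "{x. h x \<in> perp V} = perp (h' ` V)"
  unfolding perp_def using adj by (auto simp: mult.commute)

lemma adj_L_sym: "T (L' x * y) = T (x * L y)"
  using adj_L[of y x] by (simp add: mult.commute)

lemma adj_g_sym: "T (g' x * y) = T (x * g y)"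
  using adj_g[of y x] by (simp add: mult.commute)

abbreviation "K \<equiv> (ker_tr m n :: 'a set)"

lemma A_iff: "(\<forall>y. L y \<in> S \<longrightarrow> y \<in> S) \<longleftrightarrow> L' ` K = K"
proof -
  have sub: "subgrp (L' ` K)" by (rule subgrp_image[OF K_subgrp addh_L'])
  have "(\<forall>y. L y \<in> S \<longrightarrow> y \<in> S) \<longleftrightarrow> {y. L y \<in> perp K} \<subseteq> perp K"
    using S_eq by auto
  also have "\<dots> \<longleftrightarrow> perp (L' ` K) \<subseteq> perp K"
    by (simp add: preimage_perp[OF adj_L])
  also have "\<dots> \<longleftrightarrow> K \<subseteq> L' ` K" by (rule perp_le_iff[OF sub K_subgrp])
  also have "\<dots> \<longleftrightarrow> L' ` K = K"
  proof
    assume "K \<subseteq> L' ` K"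
    moreover have "card (L' ` K) \<le> card K" by (rule card_image_le) simp
    ultimately show "L' ` K = K" by (metis card_seteq finite)
  qed auto
  finally show ?thesis .
qed

lemma sqrt_K: "k \<in> K \<Longrightarrow> sqrt2 k \<in> K"
  unfolding ker_tr_def using Tr_sq[of "sqrt2 k"] by (simp add: sqrt2_sq)

lemma coset_eq:
  assumes "subgrp V"
  shows "coset V x = coset V y \<longleftrightarrow> x + y \<in> V"
proof
  assume e: "coset V x = coset V y"
  have "x \<in> coset V x" using assms unfolding coset_def subgrp_def by force
  then obtain k where "k \<in> V" "x = k + y" using e unfolding coset_def by auto
  then show "x + y \<in> V" by (simp add: add.assoc)
next
  assume xy: "x + y \<in> V"
  have "(\<lambda>k. k + x) ` V \<subseteq> (\<lambda>k. k + y) ` V" if "x + y \<in> V" for x y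
  proof
    fix z assume "z \<in> (\<lambda>k. k + x) ` V"
    then obtain k where k: "k \<in> V" "z = k + x" by auto
    then have "k + (x + y) \<in> V" "z = (k + (x + y)) + y" using that assms
      unfolding subgrp_def by (auto simp: add.assoc)
    then show "z \<in> (\<lambda>k. k + y) ` V" by blast
  qed
  then show "coset V x = coset V y" unfolding coset_def using xy by (metis add.commute subset_antisym)
qed

end



context ff
begin

lemma induced_coset:
  assumes wd: "\<forall>x y. x + y \<in> K \<longrightarrow> g' x + g' y \<in> K"
  shows "induced K g' (coset K x) = coset K (g' x)"
proof -
  define b where "b = (SOME b. coset K x = coset K b)"
  have "coset K x = coset K b" unfolding b_def by (rule someI) (rule refl)
  then have "x + b \<in> K" using coset_eq[OF K_subgrp] by simp
  then have "g' b + g' x \<in> K" using wd by (metis add.commute)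
  then show ?thesis unfolding induced_def b_def[symmetric] using coset_eq[OF K_subgrp] by simp
qed

lemma B_iff:
  assumes R1: "L' ` K = K"
  shows "induces_automorphism K g' \<longleftrightarrow> (\<forall>y\<in>S. y \<noteq> 0 \<longrightarrow> g y \<noteq> 0)"
proof -
  have gK: "g' k \<in> K" if "k \<in> K" for k
  proof -
    have "L' k \<in> K" using R1 that by blast
    moreover have "sqrt2 k \<in> K" using sqrt_K[OF that] .
    ultimately show ?thesis using K_subgrp unfolding g'_def subgrp_def by simp
  qed
  have wd: "\<forall>x y. x + y \<in> K \<longrightarrow> g' x + g' y \<in> K"
  proof (intro allI impI)
    fix x y assume xy: "x + y \<in> K"
    have e: "g' (x + y) = g' x + g' y" using addh_g' unfolding addh_def by simp
    have "g' (x + y) \<in> K" using gK[OF xy] .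
    then show "g' x + g' y \<in> K" by (simp only: e)
  qed
  have wd': "\<forall>a b. coset K a = coset K b \<longrightarrow> coset K (g' a) = coset K (g' b)"
    using wd coset_eq[OF K_subgrp] by simp
  have ad: "\<forall>a b. coset K (g' (a + b)) = coset K (g' a + g' b)"
    using addh_g' unfolding addh_def by simp
  have fq: "finite (quot K)" by simp
  have ind: "induced K g' (coset K x) = coset K (g' x)" for x by (rule induced_coset[OF wd])
  have into: "induced K g' ` quot K \<subseteq> quot K" unfolding quot_def using ind by auto
  have step1: "bij_betw (induced K g') (quot K) (quot K) \<longleftrightarrow> (\<forall>x. g' x \<in> K \<longrightarrow> x \<in> K)"
  proof
    assume "bij_betw (induced K g') (quot K) (quot K)"
    then have inj: "inj_on (induced K g') (quot K)" by (rule bij_betw_imp_inj_on)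
    show "\<forall>x. g' x \<in> K \<longrightarrow> x \<in> K"
    proof (intro allI impI)
      fix x assume gx: "g' x \<in> K"
      have g0: "g' 0 = 0" by (rule addh_0[OF addh_g'])
      have "coset K (g' x) = coset K (g' 0)" using gx g0 coset_eq[OF K_subgrp] by simp
      then have "induced K g' (coset K x) = induced K g' (coset K 0)" using ind by simp
      then have "coset K x = coset K 0" using inj unfolding quot_def inj_on_def by blast
      then show "x \<in> K" using coset_eq[OF K_subgrp] by simp
    qed
  next
    assume H: "\<forall>x. g' x \<in> K \<longrightarrow> x \<in> K"
    have inj: "inj_on (induced K g') (quot K)"
    proof (rule inj_onI)
      fix C D assume "C \<in> quot K" "D \<in> quot K" and e: "induced K g' C = induced K g' D"
      then obtain x y where xy: "C = coset K x" "D = coset K y" unfolding quot_def by auto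
      then have "coset K (g' x) = coset K (g' y)" using e ind by simp
      then have "g' x + g' y \<in> K" using coset_eq[OF K_subgrp] by simp
      then have "g' (x + y) \<in> K" using addh_g' unfolding addh_def by simp
      then have "x + y \<in> K" using H by blast
      then show "C = D" using xy coset_eq[OF K_subgrp] by simp
    qed
    moreover have "induced K g' ` quot K = quot K"
      using into fq by (intro card_subset_eq) (simp_all add: card_image[OF inj])
    ultimately show "bij_betw (induced K g') (quot K) (quot K)" unfolding bij_betw_def by simp
  qed
  have sub_gS: "subgrp (g ` S)" by (rule subgrp_image[OF S_subgrp addh_g])
  have pre: "{x. g' x \<in> K} = perp (g ` S)"
    using preimage_perp[OF adj_g_sym, of S] K_eq by simp
  have gS: "g ` S \<subseteq> S"
  proof -
    have "K \<subseteq> perp (g ` S)" using pre gK by auto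
    then have "perp S \<subseteq> perp (g ` S)" using K_eq by simp
    then show ?thesis using perp_le_iff[OF S_subgrp sub_gS] by simp
  qed
  have step2: "(\<forall>x. g' x \<in> K \<longrightarrow> x \<in> K) \<longleftrightarrow> S \<subseteq> g ` S"
  proof -
    have "(\<forall>x. g' x \<in> K \<longrightarrow> x \<in> K) \<longleftrightarrow> perp (g ` S) \<subseteq> perp S"
      using pre K_eq by auto
    also have "\<dots> \<longleftrightarrow> S \<subseteq> g ` S" by (rule perp_le_iff[OF sub_gS S_subgrp])
    finally show ?thesis .
  qed
  have step3: "S \<subseteq> g ` S \<longleftrightarrow> (\<forall>y\<in>S. y \<noteq> 0 \<longrightarrow> g y \<noteq> 0)"
  proof
    assume "S \<subseteq> g ` S"
    then have gSS: "g ` S = S" using gS by blast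
    have "inj_on g S" by (rule eq_card_imp_inj_on) (simp_all add: gSS)
    moreover have "0 \<in> S" "g 0 = 0" using S_subgrp addh_0[OF addh_g] unfolding subgrp_def by auto
    ultimately show "\<forall>y\<in>S. y \<noteq> 0 \<longrightarrow> g y \<noteq> 0" unfolding inj_on_def by metis
  next
    assume H: "\<forall>y\<in>S. y \<noteq> 0 \<longrightarrow> g y \<noteq> 0"
    have "inj_on g S"
    proof (rule inj_onI)
      fix x y assume "x \<in> S" "y \<in> S" "g x = g y"
      then have "x + y \<in> S" "g (x + y) = 0" using S_subgrp addh_g unfolding subgrp_def addh_def
        by auto
      then have "x + y = 0" using H by blast
      then show "x = y" by (simp add: add_eq0_iff)
    qed
    then have "card (g ` S) = card S" by (rule card_image)
    then have "g ` S = S" using gS by (intro card_subset_eq) auto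
    then show "S \<subseteq> g ` S" by simp
  qed
  have "induces_automorphism K g' \<longleftrightarrow> bij_betw (induced K g') (quot K) (quot K)"
    unfolding induces_automorphism_def using wd' ad by blast
  then show ?thesis using step1 step2 step3 by simp
qed

end



context ff
begin

definition Q :: "'a \<Rightarrow> 'a" where "Q x = tr m n (x ^ (q + 1))"
definition c :: "'a \<Rightarrow> 'a" where "c y = y ^ q + y ^ (q ^ (n - 1))"

lemma n_pos: "n \<ge> 1" using nodd by (cases n) auto

lemma pow_qn1: "((y::'a) ^ (q ^ (n - 1))) ^ q = y"
proof -
  have "(y ^ (q ^ (n - 1))) ^ q = y ^ (q ^ (n - 1) * q)" by (simp add: power_mult)
  also have "q ^ (n - 1) * q = q ^ n" using n_pos by (simp add: power_Suc2[symmetric])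
  finally show ?thesis using fermat_qn by simp
qed

lemma Tr_swap: "tr m n (x ^ q * y) = tr m n ((x::'a) * y ^ (q ^ (n - 1)))"
proof -
  have "(x * y ^ (q ^ (n - 1))) ^ q = x ^ q * y" by (simp only: power_mult_distrib pow_qn1)
  then show ?thesis using Tr_pow_q[of "x * y ^ (q ^ (n - 1))"] by simp
qed

lemma Q_add: "Q (x + y) = Q x + Q y + tr m n (x * c y)"
proof -
  have "(x + y) ^ (q + 1) = (x ^ q + y ^ q) * (x + y)" by (simp add: powq_add1)
  also have "\<dots> = x ^ (q + 1) + y ^ (q + 1) + (x ^ q * y + x * y ^ q)" by (simp add: algebra_simps)
  finally have "Q (x + y) = Q x + Q y + (tr m n (x ^ q * y) + tr m n (x * y ^ q))"
    unfolding Q_def by (simp add: Tr_add)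
  then show ?thesis unfolding c_def by (simp add: Tr_swap Tr_add distrib_left add_ac)
qed

lemma c_zero: "c y = 0 \<Longrightarrow> y \<in> S"
proof -
  assume "c y = 0"
  then have e: "y ^ q = y ^ (q ^ (n - 1))" unfolding c_def by (simp add: add_eq0_iff)
  have y2: "y ^ (q ^ 2) = y"
  proof -
    have "y ^ (q ^ 2) = (y ^ q) ^ q" by (simp add: power_mult[symmetric] power2_eq_square)
    then show ?thesis using e pow_qn1 by simp
  qed
  have ev: "y ^ (q ^ (2 * j)) = y" for j
  proof (induction j)
    case 0 then show ?case by simp
  next
    case (Suc j)
    have qq: "q ^ (2 * Suc j) = q ^ (2 * j) * q ^ 2" by (simp add: power_add[symmetric])
    have "y ^ (q ^ (2 * Suc j)) = (y ^ (q ^ (2 * j))) ^ (q ^ 2)"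
      by (subst qq) (rule power_mult)
    also have "\<dots> = y" by (simp only: Suc y2)
    finally show ?case .
  qed
  obtain k where "n = 2 * k + 1" using nodd oddE by blast
  then have "n - 1 = 2 * k" by simp
  then have "y ^ (q ^ (n - 1)) = y" using ev[of k] by (simp only:)
  then show "y \<in> S" using e unfolding S_def by (simp only: mem_Collect_eq)
qed

lemma c_S: "y \<in> S \<Longrightarrow> c y = 0"
  unfolding c_def using S_pow[of y "n - 1"] by (simp add: S_def)

lemma of_nat_n: "(of_nat n :: 'a) = 1"
proof -
  obtain k where "n = 2 * k + 1" using nodd oddE by blast
  then show ?thesis using two0 by simp
qed

lemma Q_S: "y \<in> S \<Longrightarrow> Q y = y ^ 2"
proof -
  assume y: "y \<in> S"
  then have "y ^ (q + 1) = y ^ 2" unfolding S_def by (simp add: power2_eq_square)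
  moreover have "y ^ 2 \<in> S"
  proof -
    have "(y ^ 2) ^ q = (y ^ q) ^ 2" by (simp only: power_mult[symmetric] mult.commute)
    then show ?thesis using y unfolding S_def by simp
  qed
  ultimately have "Q y = (\<Sum>i<n. y ^ 2)" unfolding Q_def tr_def using S_pow by simp
  then show ?thesis using of_nat_n by simp
qed

lemma LHS_iff:
  "bij (\<lambda>x::'a. tr m n (x ^ (2 ^ m + 1)) + L x) \<longleftrightarrow>
     (\<forall>y. L y \<in> S \<longrightarrow> y \<in> S) \<and> (\<forall>y\<in>S. y \<noteq> 0 \<longrightarrow> g y \<noteq> 0)"
proof -
  define f where "f x = Q x + L x" for x
  have fdef: "(\<lambda>x::'a. tr m n (x ^ (2 ^ m + 1)) + L x) = f" unfolding f_def Q_def by simp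
  have fadd: "f (x + y) = f x + (f y + tr m n (x * c y))" for x y
  proof -
    have Lxy: "L (x + y) = L x + L y" using addh_L unfolding addh_def by blast
    show ?thesis unfolding f_def Lxy Q_add by (simp only: ac_simps)
  qed
  have "bij f \<longleftrightarrow> inj f" using finite_UNIV_inj_surj[of f, OF finite] unfolding bij_def by blast
  also have "inj f \<longleftrightarrow> (\<forall>x y. y \<noteq> 0 \<longrightarrow> f (x + y) \<noteq> f x)"
  proof
    assume "inj f" then show "\<forall>x y. y \<noteq> 0 \<longrightarrow> f (x + y) \<noteq> f x"
      unfolding inj_def by (metis add_0_right add_left_cancel)
  next
    assume H: "\<forall>x y. y \<noteq> 0 \<longrightarrow> f (x + y) \<noteq> f x"
    show "inj f"
    proof (rule injI)
      fix u v assume e: "f u = f v"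
      show "u = v"
      proof (rule ccontr)
        assume "u \<noteq> v"
        then have "u + v \<noteq> 0" by (simp add: add_eq0_iff)
        moreover have "u + (u + v) = v" by (simp add: add.assoc[symmetric])
        ultimately show False using H e by metis
      qed
    qed
  qed
  also have "\<dots> \<longleftrightarrow> (\<forall>y. y \<noteq> 0 \<longrightarrow> (\<forall>x. f y \<noteq> tr m n (x * c y)))"
  proof -
    have step: "f (x + y) \<noteq> f x \<longleftrightarrow> f y \<noteq> tr m n (x * c y)" for x y
    proof -
      have "f (x + y) = f x \<longleftrightarrow> f y + tr m n (x * c y) = 0" using fadd[of x y] by simp
      then show ?thesis by (simp add: add_eq0_iff)
    qed
    show ?thesis using step by blast
  qed
  also have "\<dots> \<longleftrightarrow> (\<forall>y. L y \<in> S \<longrightarrow> y \<in> S) \<and> (\<forall>y\<in>S. y \<noteq> 0 \<longrightarrow> g y \<noteq> 0)"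
  proof -
    have yS: "(\<forall>x. f y \<noteq> tr m n (x * c y)) \<longleftrightarrow> g y \<noteq> 0" if "y \<in> S" for y
    proof -
      have "tr m n (x * c y) = 0" for x using c_S[OF that] by (simp add: tr_def zero_power)
      moreover have "f y = g y" using Q_S[OF that] unfolding f_def g_def by (simp add: add.commute)
      ultimately show ?thesis by simp
    qed
    have ynS: "(\<forall>x. f y \<noteq> tr m n (x * c y)) \<longleftrightarrow> L y \<notin> S" if "y \<notin> S" for y
    proof -
      have cy: "c y \<noteq> 0" using that c_zero by blast
      have 1: "(\<forall>x. f y \<noteq> tr m n (x * c y)) \<longleftrightarrow> f y \<notin> S"
      proof
        assume H: "\<forall>x. f y \<noteq> tr m n (x * c y)"
        show "f y \<notin> S"
        proof
          assume "f y \<in> S"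
          then have "f y \<in> range (tr m n)" using range_Tr by simp
          then obtain z where z: "f y = tr m n z" by blast
          have "z / c y * c y = z" using cy by simp
          then have "f y = tr m n (z / c y * c y)" using z by simp
          then show False using H by blast
        qed
      next
        assume "f y \<notin> S"
        then show "\<forall>x. f y \<noteq> tr m n (x * c y)" using Tr_in_S by metis
      qed
      have 2: "f y \<in> S \<longleftrightarrow> L y \<in> S"
      proof -
        have QS: "Q y \<in> S" unfolding Q_def by (rule Tr_in_S)
        have e1: "L y = f y + Q y" unfolding f_def by (simp add: add.assoc[symmetric] add.commute)
        have e2: "f y = L y + Q y" unfolding f_def by (simp add: add.commute)
        have cl: "u \<in> S \<Longrightarrow> v \<in> S \<Longrightarrow> u + v \<in> S" for u v using S_subgrp unfolding subgrp_def by blast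
        show ?thesis using cl[OF _ QS] e1 e2 by metis
      qed
      show ?thesis using 1 2 by simp
    qed
    have z: "(\<forall>x. f 0 \<noteq> tr m n (x * c 0)) \<longleftrightarrow> g 0 \<noteq> 0" using yS S_subgrp unfolding subgrp_def by blast
    show ?thesis
    proof
      assume H: "\<forall>y. y \<noteq> 0 \<longrightarrow> (\<forall>x. f y \<noteq> tr m n (x * c y))"
      show "(\<forall>y. L y \<in> S \<longrightarrow> y \<in> S) \<and> (\<forall>y\<in>S. y \<noteq> 0 \<longrightarrow> g y \<noteq> 0)"
      proof (intro conjI allI impI ballI)
        fix y assume "L y \<in> S"
        show "y \<in> S"
        proof (rule ccontr)
          assume ny: "y \<notin> S"
          then have "y \<noteq> 0" using S_subgrp unfolding subgrp_def by auto
          then show False using H ynS[OF ny] \<open>L y \<in> S\<close> by blast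
        qed
      next
        fix y assume "y \<in> S" "y \<noteq> 0"
        then show "g y \<noteq> 0" using H yS by blast
      qed
    next
      assume H: "(\<forall>y. L y \<in> S \<longrightarrow> y \<in> S) \<and> (\<forall>y\<in>S. y \<noteq> 0 \<longrightarrow> g y \<noteq> 0)"
      show "\<forall>y. y \<noteq> 0 \<longrightarrow> (\<forall>x. f y \<noteq> tr m n (x * c y))"
      proof (rule allI, rule impI)
        fix y :: 'a assume y0: "y \<noteq> 0"
        show "\<forall>x. f y \<noteq> tr m n (x * c y)"
        proof (cases "y \<in> S")
          case True
          then have "g y \<noteq> 0" using H y0 by blast
          then show "\<forall>x. f y \<noteq> tr m n (x * c y)" using yS[OF True] by blast
        next
          case False
          then have "L y \<notin> S" using H by blast
          then show "\<forall>x. f y \<noteq> tr m n (x * c y)" using ynS[OF False] by blast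
        qed
      qed
    qed
  qed
  finally show ?thesis using fdef by simp
qed

lemma main:
  "bij (\<lambda>x::'a. tr m n (x ^ (2 ^ m + 1)) + lin2 N a x) \<longleftrightarrow>
     (lin2_adj N a ` ker_tr m n = ker_tr m n \<and>
      induces_automorphism (ker_tr m n) (\<lambda>x. lin2_adj N a x + sqrt2 x))"
proof -
  have g'eq: "(\<lambda>x. lin2_adj N a x + sqrt2 x) = g'" unfolding g'_def by simp
  show ?thesis unfolding g'eq using LHS_iff A_iff B_iff by blast
qed

end

theorem mainTheorem7:
  fixes m n :: nat and a :: "nat \<Rightarrow> 'a::{field,finite}"
  assumes "m \<ge> 1" and "odd n"
    and "card (UNIV :: 'a set) = 2 ^ (m * n)"
  shows "bij (\<lambda>x::'a. tr m n (x ^ (2 ^ m + 1)) + lin2 (m * n) a x) \<longleftrightarrow>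
         (lin2_adj (m * n) a ` ker_tr m n = ker_tr m n \<and>
          induces_automorphism (ker_tr m n) (\<lambda>x. lin2_adj (m * n) a x + sqrt2 x))"
proof -
  interpret ff m n a using assms by unfold_locales
  show ?thesis by (rule main)
qed

end
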